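(* Let $\alpha\in(0,1)$ be irrational. Then: (a) For all $1\le t<q_n$ we have $s_{nt}=s_{n(q_n-t)}$, $h_{nt}=h_{n(q_n-t)}$ and $\xi_{nt}=-\xi_{n(q_n-t)}$. (b) If $n$ is sufficiently large, then $s_{nt}>s_{n0}$ for all $1\le t<q_n$.
   Context: $\alpha=[0;a_1,a_2,\ldots]$, with $q_0=0$, $q_1=1$, $q_{n+1}=a_nq_n+q_{n-1}$ and $p_0=1$, $p_1=0$, $p_{n+1}=a_np_n+p_{n-1}$. $\Lambda_n=q_n\alpha-p_n$. For $t\in\{0,\ldots,q_n-1\}$ define: - $\xi_{nt}=\{tq_{n-1}/q_n\}-\frac12$; - $s_{nt}=2\sin\big(\pi[t/q_n-|\Lambda_n|\xi_{nt}]\big)$; - $h_{nt}=\cot(\pi t/q_n)\sin(\pi|\Lambda_n|\xi_{nt})$. *)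

theory Defs
  imports Complex_Main
begin

text \<open>Continued fraction expansion alpha = [0; a_1, a_2, ...] of alpha in (0,1) via the Gauss map:
  cf_x alpha 0 = alpha, cf_x alpha (k+1) = frac (1 / cf_x alpha k), and a_n = floor (1 / cf_x alpha (n-1)).\<close>

fun cf_x :: "real \<Rightarrow> nat \<Rightarrow> real" where
  "cf_x \<alpha> 0 = \<alpha>"
| "cf_x \<alpha> (Suc k) = frac (1 / cf_x \<alpha> k)"

definition cf_a :: "real \<Rightarrow> nat \<Rightarrow> nat" where
  "cf_a \<alpha> n = nat \<lfloor>1 / cf_x \<alpha> (n - 1)\<rfloor>"

fun cf_q :: "real \<Rightarrow> nat \<Rightarrow> nat" where
  "cf_q \<alpha> 0 = 0"
| "cf_q \<alpha> (Suc 0) = 1"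
| "cf_q \<alpha> (Suc (Suc n)) = cf_a \<alpha> (Suc n) * cf_q \<alpha> (Suc n) + cf_q \<alpha> n"

fun cf_p :: "real \<Rightarrow> nat \<Rightarrow> nat" where
  "cf_p \<alpha> 0 = 1"
| "cf_p \<alpha> (Suc 0) = 0"
| "cf_p \<alpha> (Suc (Suc n)) = cf_a \<alpha> (Suc n) * cf_p \<alpha> (Suc n) + cf_p \<alpha> n"

definition Lam :: "real \<Rightarrow> nat \<Rightarrow> real" where
  "Lam \<alpha> n = real (cf_q \<alpha> n) * \<alpha> - real (cf_p \<alpha> n)"

definition xi :: "real \<Rightarrow> nat \<Rightarrow> nat \<Rightarrow> real" where
  "xi \<alpha> n t = frac (real t * real (cf_q \<alpha> (n - 1)) / real (cf_q \<alpha> n)) - 1/2"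

definition s_fun :: "real \<Rightarrow> nat \<Rightarrow> nat \<Rightarrow> real" where
  "s_fun \<alpha> n t = 2 * sin (pi * (real t / real (cf_q \<alpha> n) - \<bar>Lam \<alpha> n\<bar> * xi \<alpha> n t))"

definition h_fun :: "real \<Rightarrow> nat \<Rightarrow> nat \<Rightarrow> real" where
  "h_fun \<alpha> n t = cot (pi * real t / real (cf_q \<alpha> n)) * sin (pi * \<bar>Lam \<alpha> n\<bar> * xi \<alpha> n t)"

end

theory Submission
  imports Defs
begin

lemma x_irr: "\<alpha> \<notin> \<rat> \<Longrightarrow> cf_x \<alpha> k \<notin> \<rat>"
proof (induction k)
  case 0 then show ?case by simp
next
  case (Suc k)
  show ?case
  proof
    assume h: "cf_x \<alpha> (Suc k) \<in> \<rat>"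
    have "1 / cf_x \<alpha> k = cf_x \<alpha> (Suc k) + of_int \<lfloor>1 / cf_x \<alpha> k\<rfloor>"
      by (simp add: frac_def)
    also have "\<dots> \<in> \<rat>" using h by simp
    finally have "inverse (1 / cf_x \<alpha> k) \<in> \<rat>" by (rule Rats_inverse)
    then show False using Suc by simp
  qed
qed

lemma x_bounds:
  assumes "0 < \<alpha>" "\<alpha> < 1" "\<alpha> \<notin> \<rat>"
  shows "0 < cf_x \<alpha> k \<and> cf_x \<alpha> k < 1"
proof (cases k)
  case 0 then show ?thesis using assms by simp
next
  case (Suc j)
  have "cf_x \<alpha> k \<notin> \<rat>" using x_irr assms(3) by blast
  then have "cf_x \<alpha> k \<noteq> 0" by auto
  moreover have "cf_x \<alpha> k \<ge> 0" "cf_x \<alpha> k < 1" using Suc by (auto simp: frac_lt_1)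
  ultimately show ?thesis by auto
qed

lemma a_rel:
  assumes "0 < \<alpha>" "\<alpha> < 1" "\<alpha> \<notin> \<rat>"
  shows "1 / cf_x \<alpha> k = real (cf_a \<alpha> (Suc k)) + cf_x \<alpha> (Suc k) \<and> cf_a \<alpha> (Suc k) \<ge> 1"
proof -
  have b: "0 < cf_x \<alpha> k" "cf_x \<alpha> k < 1" using x_bounds[OF assms] by auto
  have "1 < 1 / cf_x \<alpha> k" using b by simp
  then have f: "\<lfloor>1 / cf_x \<alpha> k\<rfloor> \<ge> 1" by (simp add: le_floor_iff)
  then have "real (cf_a \<alpha> (Suc k)) = of_int \<lfloor>1 / cf_x \<alpha> k\<rfloor>"
    unfolding cf_a_def by (metis diff_Suc_1 of_nat_nat order_trans zero_le_one of_int_of_nat_eq)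
  moreover have "cf_a \<alpha> (Suc k) \<ge> 1" using nat_mono[OF f] by (simp add: cf_a_def)
  ultimately show ?thesis by (simp add: frac_def)
qed

definition D :: "real \<Rightarrow> nat \<Rightarrow> real" where
  "D \<alpha> n = (\<Prod>k<n. cf_x \<alpha> k)"

lemma D_Suc: "D \<alpha> (Suc n) = D \<alpha> n * cf_x \<alpha> n"
  by (simp add: D_def)

lemma D_pos:
  assumes "0 < \<alpha>" "\<alpha> < 1" "\<alpha> \<notin> \<rat>"
  shows "D \<alpha> n > 0"
  unfolding D_def using x_bounds[OF assms] by (simp add: prod_pos)

lemma D_rec:
  assumes "0 < \<alpha>" "\<alpha> < 1" "\<alpha> \<notin> \<rat>"
  shows "D \<alpha> n = real (cf_a \<alpha> (Suc n)) * D \<alpha> (Suc n) + D \<alpha> (Suc (Suc n))"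
proof -
  have r: "1 / cf_x \<alpha> n = real (cf_a \<alpha> (Suc n)) + cf_x \<alpha> (Suc n)"
    using a_rel[OF assms] by blast
  have p: "cf_x \<alpha> n > 0" using x_bounds[OF assms] by blast
  have "cf_x \<alpha> n * (real (cf_a \<alpha> (Suc n)) + cf_x \<alpha> (Suc n)) = 1"
    using r p by (metis nonzero_mult_div_cancel_left less_irrefl div_by_1 mult.commute times_divide_eq_right divide_self_if)
  then have "D \<alpha> n * (cf_x \<alpha> n * (real (cf_a \<alpha> (Suc n)) + cf_x \<alpha> (Suc n))) = D \<alpha> n" by simp
  then show ?thesis by (simp add: D_Suc algebra_simps)
qed

lemma Lam_D:
  assumes "0 < \<alpha>" "\<alpha> < 1" "\<alpha> \<notin> \<rat>"
  shows "Lam \<alpha> n = (-1)^(n+1) * D \<alpha> n \<and> Lam \<alpha> (Suc n) = (-1)^(n+2) * D \<alpha> (Suc n)"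
proof (induction n)
  case 0 then show ?case by (simp add: Lam_def D_def)
next
  case (Suc n)
  have "Lam \<alpha> (Suc (Suc n)) = real (cf_a \<alpha> (Suc n)) * Lam \<alpha> (Suc n) + Lam \<alpha> n"
    by (simp add: Lam_def algebra_simps)
  also have "\<dots> = (-1)^(n+1) * (D \<alpha> n - real (cf_a \<alpha> (Suc n)) * D \<alpha> (Suc n))"
    using Suc by (simp add: algebra_simps)
  also have "\<dots> = (-1)^(Suc n+2) * D \<alpha> (Suc (Suc n))"
    using D_rec[OF assms, of n] by simp
  finally show ?case using Suc by simp
qed

lemma abs_Lam:
  assumes "0 < \<alpha>" "\<alpha> < 1" "\<alpha> \<notin> \<rat>"
  shows "\<bar>Lam \<alpha> n\<bar> = D \<alpha> n"
  using Lam_D[OF assms, of n] D_pos[OF assms, of n] by (simp add: abs_mult)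

lemma inv_qD:
  assumes "0 < \<alpha>" "\<alpha> < 1" "\<alpha> \<notin> \<rat>"
  shows "real (cf_q \<alpha> (Suc n)) * D \<alpha> n + real (cf_q \<alpha> n) * D \<alpha> (Suc n) = 1"
proof (induction n)
  case 0 then show ?case by (simp add: D_def)
next
  case (Suc n)
  then show ?case using D_rec[OF assms, of n] by (simp add: algebra_simps)
qed

lemma q_mono:
  assumes "0 < \<alpha>" "\<alpha> < 1" "\<alpha> \<notin> \<rat>"
  shows "cf_q \<alpha> n \<le> cf_q \<alpha> (Suc n)"
proof (cases n)
  case (Suc m)
  have "cf_a \<alpha> (Suc m) \<ge> 1" using a_rel[OF assms] by blast
  then have "cf_q \<alpha> (Suc m) \<le> cf_a \<alpha> (Suc m) * cf_q \<alpha> (Suc m)"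
    using mult_le_mono1[of 1 "cf_a \<alpha> (Suc m)" "cf_q \<alpha> (Suc m)"] by linarith
  then show ?thesis using Suc by (metis cf_q.simps(3) trans_le_add1)
qed simp

lemma q_coprime: "coprime (cf_q \<alpha> (Suc n)) (cf_q \<alpha> n)"
proof (induction n)
  case 0 then show ?case by simp
next
  case (Suc n)
  then show ?case by (simp add: coprime_iff_gcd_eq_1 gcd_add_mult gcd.commute)
qed

lemma qD_lt1:
  assumes "0 < \<alpha>" "\<alpha> < 1" "\<alpha> \<notin> \<rat>" "cf_q \<alpha> n > 0"
  shows "real (cf_q \<alpha> n) * D \<alpha> n < 1"
proof -
  have "real (cf_q \<alpha> n) * D \<alpha> (Suc n) > 0" using assms(4) D_pos[OF assms(1-3)] by simp
  moreover have "real (cf_q \<alpha> n) * D \<alpha> n \<le> real (cf_q \<alpha> (Suc n)) * D \<alpha> n"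
    using q_mono[OF assms(1-3), of n] D_pos[OF assms(1-3), of n] by (simp add: mult_right_mono)
  ultimately show ?thesis using inv_qD[OF assms(1-3), of n] by linarith
qed

lemma xi_bounds: "- 1/2 \<le> xi \<alpha> n t \<and> xi \<alpha> n t < 1/2"
  unfolding xi_def using frac_lt_1[of "real t * real (cf_q \<alpha> (n - 1)) / real (cf_q \<alpha> n)"] frac_ge_0[of "real t * real (cf_q \<alpha> (n - 1)) / real (cf_q \<alpha> n)"] by linarith

lemma xi_sym:
  assumes "1 \<le> t" "t < cf_q \<alpha> n"
  shows "xi \<alpha> n (cf_q \<alpha> n - t) = - xi \<alpha> n t"
proof -
  obtain m where n: "n = Suc m" using assms by (cases n) auto
  define q where "q = cf_q \<alpha> n"
  define r where "r = cf_q \<alpha> m"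
  have cop: "coprime q r" unfolding q_def r_def n by (rule q_coprime)
  have qpos: "real q > 0" using assms q_def by simp
  define y where "y = real t * real r / real q"
  have ny: "y \<notin> \<int>"
  proof
    assume "y \<in> \<int>"
    then obtain k where k: "y = of_int k" by (auto elim: Ints_cases)
    then have "real t * real r = of_int k * real q" using qpos unfolding y_def by (simp add: field_simps)
    then have "int (t * r) = k * int q" by (metis of_int_eq_iff of_int_mult of_int_of_nat_eq of_nat_mult)
    then have "int q dvd int (t * r)" by simp
    then have "q dvd t * r" by (simp only: of_nat_dvd_iff)
    then have "q dvd t" using cop by (metis coprime_dvd_mult_left_iff)
    then show False using assms q_def by (auto dest: dvd_imp_le)
  qed
  have "real (q - t) * real r / real q = real r + (- y)"
    using assms qpos unfolding y_def q_def by (simp add: of_nat_diff field_simps)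
  then have "frac (real (q - t) * real r / real q) = frac (- y)"
    using frac_add_int_left[OF Ints_of_nat[of r], of "- y"] by simp
  also have "\<dots> = 1 - frac y" using ny by (simp add: frac_neg)
  finally show ?thesis unfolding xi_def q_def r_def y_def n by simp
qed

lemma sin_cmp:
  assumes "0 \<le> c" "c < x" "x < 1 - c"
  shows "sin (pi * c) < sin (pi * x)"
proof (cases "x \<le> 1/2")
  case True
  have a: "0 \<le> pi * c" using assms pi_gt_zero by simp
  have b: "pi * c < pi * x" using assms pi_gt_zero by simp
  have d: "pi * x \<le> pi * (1/2)" using True pi_gt_zero by (intro mult_left_mono) auto
  show ?thesis by (rule sin_monotone_2pi) (use a b d pi_gt_zero in linarith)+
next
  case False
  have a: "0 \<le> pi * c" using assms pi_gt_zero by simp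
  have b: "pi * c < pi * (1 - x)" using assms pi_gt_zero by simp
  have d: "pi * (1 - x) \<le> pi * (1/2)" using False pi_gt_zero by (intro mult_left_mono) auto
  have "sin (pi * c) < sin (pi * (1 - x))" by (rule sin_monotone_2pi) (use a b d pi_gt_zero in linarith)+
  also have "pi * (1 - x) = pi - pi * x" by (simp add: algebra_simps)
  finally show ?thesis by simp
qed

theorem lemma4p2:
  fixes \<alpha> :: real
  assumes "0 < \<alpha>" "\<alpha> < 1" "\<alpha> \<notin> \<rat>"
  shows "(\<forall>n t. 1 \<le> t \<and> t < cf_q \<alpha> n \<longrightarrow>
            s_fun \<alpha> n t = s_fun \<alpha> n (cf_q \<alpha> n - t) \<and>
            h_fun \<alpha> n t = h_fun \<alpha> n (cf_q \<alpha> n - t) \<and>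
            xi \<alpha> n t = - xi \<alpha> n (cf_q \<alpha> n - t))
       \<and> (\<exists>N. \<forall>n\<ge>N. \<forall>t. 1 \<le> t \<and> t < cf_q \<alpha> n \<longrightarrow> s_fun \<alpha> n t > s_fun \<alpha> n 0)"
proof (intro conjI allI impI exI[of _ 0])
  fix n t assume h: "1 \<le> t \<and> t < cf_q \<alpha> n"
  define q where "q = cf_q \<alpha> n"
  define L where "L = \<bar>Lam \<alpha> n\<bar>"
  have xs: "xi \<alpha> n (q - t) = - xi \<alpha> n t" using xi_sym h q_def by blast
  have qpos: "real q > 0" using h q_def by simp
  have rq: "real (q - t) / real q = 1 - real t / real q"
    using h qpos q_def by (simp add: of_nat_diff field_simps)
  show "xi \<alpha> n t = - xi \<alpha> n (cf_q \<alpha> n - t)" using xs q_def by simp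
  have "s_fun \<alpha> n (q - t) = 2 * sin (pi - pi * (real t / real q - L * xi \<alpha> n t))"
    unfolding s_fun_def L_def[symmetric] q_def[symmetric] xs rq by (simp add: algebra_simps)
  then show "s_fun \<alpha> n t = s_fun \<alpha> n (cf_q \<alpha> n - t)"
    unfolding s_fun_def L_def[symmetric] q_def[symmetric] by simp
  have c: "cot (pi * real (q - t) / real q) = - cot (pi * real t / real q)"
  proof -
    have "pi * real (q - t) / real q = pi - pi * real t / real q"
    proof -
      have "pi * real (q - t) / real q = pi * (real (q - t) / real q)" by simp
      also have "\<dots> = pi - pi * real t / real q" unfolding rq by (simp add: right_diff_distrib)
      finally show ?thesis .
    qed
    then show ?thesis by (simp add: cot_def)
  qed
  show "h_fun \<alpha> n t = h_fun \<alpha> n (cf_q \<alpha> n - t)"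
    unfolding h_fun_def q_def[symmetric] c xs by simp
next
  fix n t assume n: "n \<ge> 0" and h: "1 \<le> t \<and> t < cf_q \<alpha> n"
  define q where "q = cf_q \<alpha> n"
  define L where "L = \<bar>Lam \<alpha> n\<bar>"
  have qpos: "real q > 0" using h q_def by simp
  have LD: "L = D \<alpha> n" unfolding L_def by (rule abs_Lam[OF assms])
  have Lpos: "L > 0" using LD D_pos[OF assms] by simp
  have qL: "real q * L < 1" unfolding LD q_def using qD_lt1[OF assms] h by simp
  then have qL': "L < 1 / real q" using qpos by (simp add: field_simps)
  have t1: "1 / real q \<le> real t / real q" using h qpos by (simp add: divide_right_mono)
  have t2: "real t / real q \<le> 1 - 1 / real q"
  proof -
    have "real t \<le> real q - 1" using h q_def by linarith
    then show ?thesis using qpos by (simp add: field_simps)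
  qed
  have xb: "- 1/2 \<le> xi \<alpha> n t" "xi \<alpha> n t \<le> 1/2" using xi_bounds[of \<alpha> n t] by auto
  have m1: "L * xi \<alpha> n t \<le> L / 2" using xb Lpos mult_left_mono[OF xb(2), of L] by simp
  have m2: "- (L / 2) \<le> L * xi \<alpha> n t" using xb Lpos mult_left_mono[OF xb(1), of L] by simp
  have "sin (pi * (L / 2)) < sin (pi * (real t / real q - L * xi \<alpha> n t))"
    by (rule sin_cmp) (use Lpos qL' t1 t2 m1 m2 in linarith)+
  moreover have "xi \<alpha> n 0 = - 1/2" by (simp add: xi_def)
  ultimately show "s_fun \<alpha> n t > s_fun \<alpha> n 0"
    unfolding s_fun_def L_def[symmetric] q_def[symmetric] by simp
qed

end
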